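(* Let $W=\langle \mathcal{D},\mathcal{N},\mathrm{wr},\mathrm{gd}\rangle$ be a (1-safe) DAW-net with reachability graph $\mathit{RG}_W$, and let $\mathit{TS}_{\mathrm{pddl}(W)}$ be the transition system derived from the planning-domain encoding $\mathrm{pddl}(W)$ (as defined in the context). Then $\mathit{RG}_W$ and $\mathit{TS}_{\mathrm{pddl}(W)}$ are trace equivalent.
   Context: **Data model and guards.** A data model is $\mathcal{D}=(\mathcal{V},\Delta,\mathrm{dm},\mathrm{ord})$: $\mathcal{V}$ a set of variables; $\Delta=\{\Delta_1,\dots,\Delta_n\}$ domains (not necessarily disjoint); $\mathrm{dm}:\mathcal{V}\to\Delta$ total surjective, giving each variable its finite domain; $\mathrm{ord}$ a partial function giving, for some domains $\Delta_i$, a partial order $\le_{\Delta_i}$. An assignment is a partial function $\eta$ on $\mathcal{V}$ with $\eta(v)\in\mathrm{dm}(v)$ when defined. Guards: $\Phi ::= \mathit{true}\mid\mathrm{def}(v)\mid t_1=t_2\mid t_1\le t_2\mid\neg\Phi\mid\Phi\wedge\Phi$, $v\in\mathcal{V}$, $t_1,t_2\in\mathcal{V}\cup\bigcup_i\Delta_i$. With $t[\eta]=\eta(t)$ if $t$ is a variable on which $\eta$ is defined and $t$ otherwise: $\mathcal{D},\eta\models\mathit{true}$; $\mathcal{D},\eta\models\mathrm{def}(v)$ iff $\eta(v)$ defined; $\mathcal{D},\eta\models t_1=t_2$ iff $t_1[\eta],t_2[\eta]\notin\mathcal{V}$ and they are equal; $\mathcal{D},\eta\models t_1\le t_2$ iff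 $t_1[\eta],t_2[\eta]\in\Delta_i$ for some $i$ with $\mathrm{ord}(\Delta_i)$ defined and $t_1[\eta]\le_{\Delta_i}t_2[\eta]$; $\neg,\wedge$ classical. **DAW-nets.** Petri net $\mathcal{N}=(P,T,F)$, $F\subseteq(P\times T)\cup(T\times P)$, ${}^\bullet t=\{p\mid(p,t)\in F\}$, $t^\bullet=\{p\mid(t,p)\in F\}$, markings $M:P\to\mathbb{N}$; $\mathcal{N}$ is a workflow net with distinguished places $\mathit{start}$ and $\mathit{sink}$. A DAW-net is $W=\langle\mathcal{D},\mathcal{N},\mathrm{wr},\mathrm{gd}\rangle$ with $\mathrm{wr}(t)$ a partial function from $\mathcal{V}$ such that $\mathrm{wr}(t)(v)\subseteq\mathrm{dm}(v)$, and $\mathrm{gd}(t)$ a guard, for each $t\in T$. A state is $(M,\eta)$. A firing $(M,\eta)\xrightarrow{t}(M',\eta')$ is valid iff $\{p\mid M(p)>0\}\supseteq{}^\bullet t$; $\mathcal{D},\eta\models\mathrm{gd}(t)$; $M'(p)=M(p)-1$ for $p\in{}^\bullet t\setminus t^\bullet$, $M(p)+1$ for $p\in t^\bullet\setminus{}^\bullet t$, $M(p)$ otherwise; $\mathrm{dom}(\eta')=\mathrm{dom}(\eta)\cup\{v\mid\mathrm{wr}(t)(v)\neq\emptyset\}\setminus\{v\mid\mathrm{wr}(t)(v)=\emptyset\}$, with $\eta'(v)\in\mathrm{wr}(t)(v)$ if $v\in\mathrm{dom}(\mathrm{wr}(t))$ and $\eta'(v)=\eta(v)$ otherwise. Initial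 state $(M_s,\eta_s)$: one token in $\mathit{start}$, none elsewhere, $\eta_s$ empty. Standing assumption: $W$ is 1-safe (reachable markings have at most one token per place). $\mathcal{V}'$ denotes the finite set of variables appearing in $W$. **Reachability graph.** $\mathit{RG}_W=(T,\overline{S},\overline{s}_0,\overline{\delta})$, $\overline{s}_0=(M_s,\eta_s)$, $\overline{S}$ and $\overline{\delta}$ the least sets with $\overline{s}_0\in\overline{S}$ such that if $(M,\eta)\in\overline{S}$ and $(M,\eta)\xrightarrow{t}(M',\eta')$ is valid then $(M',\eta')\in\overline{S}$ and $((M,\eta),t,(M',\eta'))\in\overline{\delta}$. **Trace equivalence.** A path is a sequence $s_0\xrightarrow{l_1}\cdots\xrightarrow{l_n}s_n$ ($n\ge0$) from the initial state along transitions. $\mathit{RG}$ and $\mathit{TS}$ are trace equivalent iff there is an injective map $\mathrm{enc}$ from states and transitions of $\mathit{RG}$ to states and labels of $\mathit{TS}$ such that (1) every path $s_0\xrightarrow{t_1}\cdots\xrightarrow{t_n}s_n$ of $\mathit{RG}$ yields a path $\mathrm{enc}(s_0)\xrightarrow{\mathrm{enc}(t_1)}\cdots\xrightarrow{\mathrm{enc}(t_n)}\mathrm{enc}(s_n)$ of $\mathit{TS}$, and (2) for every path $s'_0\xrightarrow{t'_1}\cdots\xrightarrow{t'_n}s'_n$ of $\mathit{TS}$ there is a path $s_0\xrightarrow{t_1}\cdots\xrightarrow{t_n}s_n$ of $\mathit{RG}$ with $\mathrm{enc}(s_i)=s'_i$ and $\mathrm{enc}(t_i)=t'_i$. **State-variable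 planning.** Given objects $B$, state variables $v$ each with a range $\mathrm{Range}(v)\subseteq B$, and rigid relations over $B$, a state is an assignment of each state variable to an element of its range. Preconditions are Boolean combinations of atoms $\mathrm{true}$, $r(z_1,\dots,z_n)$ and $z_1=z_2$, where the $z_i$ are constants, parameters or state variables (state variables evaluated at the current state). An action template $\alpha$ has a head $\mathit{act}(z_1,\dots,z_k)$ with parameters ranging over finite sets, a precondition $\mathrm{pre}(\alpha)$, and effects $\mathrm{eff}(\alpha)$, a set of assignments $v\leftarrow z$; a ground action substitutes constants for the parameters. The transition function $\gamma$ is defined on $(s,a)$ iff $\mathrm{pre}(a)$ holds in $s$, and $\gamma(s,a)=\{(v,w)\mid v\leftarrow w\in\mathrm{eff}(a)\}\cup\{(v,w)\in s\mid v$ is not assigned in $\mathrm{eff}(a)\}$. **The encoding $\mathrm{pddl}(W)$.** State variables: each $v\in\mathcal{V}'$ with range $\mathrm{dm}(v)\cup\{\mathrm{null}\}$, and a Boolean state variable for each $p\in P$. Rigid relations: $\mathrm{ord}=\bigcup_i\{(o,o')\in\Delta_i^2\mid o\le_{\Delta_i}o'\}$ (over $\Delta_i$ with $\mathrm{ord}(\Delta_i)$ defined), and for $t\in T$ and $v\in\mathrm{dom}(\mathrm{wr}(t))$ the unary relation $wr_{t,v}=\mathrm{wr}(t)(v)$ if $\mathrm{wr}(t)(v)\neq\emptyset$ and $wr_{t,v}=\{\mathrm{null}\}$ otherwise. Guard translation $[\cdot]$: $[\mathit{true}]=\mathrm{true}$, $[\mathrm{def}(v)]=\neg(v=\mathrm{null})$,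 $[v=t_2]=\neg(v=\mathrm{null})\wedge(v=t_2)$, $[t_1\le t_2]=\mathrm{ord}(t_1,t_2)$, $[\neg\Phi]=\neg[\Phi]$, $[\Phi_1\wedge\Phi_2]=[\Phi_1]\wedge[\Phi_2]$. For each $t\in T$ with $\mathrm{dom}(\mathrm{wr}(t))=\{v_1,\dots,v_k\}$, the template $\alpha_t$ has head $t(z_{v_1},\dots,z_{v_k})$, precondition $[\mathrm{gd}(t)]\wedge\bigwedge_{i}wr_{t,v_i}(z_{v_i})\wedge\bigwedge_{p\in{}^\bullet t}(p=\mathrm{true})$, and effects $v_i\leftarrow z_{v_i}$ ($1\le i\le k$), $p\leftarrow\mathrm{false}$ for $p\in{}^\bullet t\setminus t^\bullet$, $p\leftarrow\mathrm{true}$ for $p\in t^\bullet$. **Mapping and transition system.** $\Psi(M,\eta)$ is the planning state mapping $v\mapsto\eta(v)$ if $\eta(v)$ is defined and $v\mapsto\mathrm{null}$ otherwise ($v\in\mathcal{V}'$), and $p\mapsto\mathrm{true}$ if $M(p)>0$, $p\mapsto\mathrm{false}$ if $M(p)=0$. $\mathit{TS}_{\mathrm{pddl}(W)}=(T,S_{\mathrm{pddl}},s_0,\delta_{\mathrm{pddl}})$ with $s_0=\Psi(\overline{s}_0)$, $S_{\mathrm{pddl}}$ the least set containing $s_0$ and closed under $s\mapsto\gamma(s,a)$ for ground actions $a$ of the templates $\alpha_t$, and $\delta_{\mathrm{pddl}}=\{(s,t,s')\in S_{\mathrm{pddl}}\times T\times S_{\mathrm{pddl}}\mid\gamma(s,a_t)=s'$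 for some ground action $a_t$ of $\alpha_t\}$. *)

theory Defs
  imports Main
begin

section \<open>Data model and guards\<close>

text \<open>Variables have type 'v, domain elements type 'd.  A data model is
  (V, Delta, dm, ord); ord is a partial function from domains to orders.\<close>

record ('v, 'd) data_model =
  D_vars :: "'v set"
  D_doms :: "'d set set"
  D_dm   :: "'v \<Rightarrow> 'd set"
  D_ord  :: "'d set \<Rightarrow> ('d \<times> 'd) set option"

definition is_partial_order :: "'d set \<Rightarrow> ('d \<times> 'd) set \<Rightarrow> bool" where
  "is_partial_order A R \<longleftrightarrow> R \<subseteq> A \<times> A \<and> (\<forall>x\<in>A. (x, x) \<in> R) \<and> antisym R \<and> trans R"

definition data_model_ok :: "('v, 'd) data_model \<Rightarrow> bool" where
  "data_model_ok D \<longleftrightarrow>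
     finite (D_doms D) \<and> (\<forall>X\<in>D_doms D. finite X) \<and>
     (\<forall>v\<in>D_vars D. D_dm D v \<in> D_doms D) \<and>
     (\<forall>X\<in>D_doms D. \<exists>v\<in>D_vars D. D_dm D v = X) \<and>
     (\<forall>X R. D_ord D X = Some R \<longrightarrow> X \<in> D_doms D \<and> is_partial_order X R)"

datatype ('v, 'd) gterm = Var 'v | Const 'd

datatype ('v, 'd) guard =
    GTrue
  | GDef 'v
  | GEq "('v, 'd) gterm" "('v, 'd) gterm"
  | GLeq "('v, 'd) gterm" "('v, 'd) gterm"
  | GNot "('v, 'd) guard"
  | GAnd "('v, 'd) guard" "('v, 'd) guard"

fun inst_term :: "('v \<rightharpoonup> 'd) \<Rightarrow> ('v, 'd) gterm \<Rightarrow> ('v, 'd) gterm" where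
  "inst_term \<eta> (Var v) = (case \<eta> v of Some d \<Rightarrow> Const d | None \<Rightarrow> Var v)"
| "inst_term \<eta> (Const d) = Const d"

fun guard_holds :: "('v, 'd) data_model \<Rightarrow> ('v \<rightharpoonup> 'd) \<Rightarrow> ('v, 'd) guard \<Rightarrow> bool" where
  "guard_holds D \<eta> GTrue = True"
| "guard_holds D \<eta> (GDef v) = (\<eta> v \<noteq> None)"
| "guard_holds D \<eta> (GEq t1 t2) =
     (\<exists>a b. inst_term \<eta> t1 = Const a \<and> inst_term \<eta> t2 = Const b \<and> a = b)"
| "guard_holds D \<eta> (GLeq t1 t2) =
     (\<exists>a b X R. inst_term \<eta> t1 = Const a \<and> inst_term \<eta> t2 = Const b \<and>
        X \<in> D_doms D \<and> D_ord D X = Some R \<and> a \<in> X \<and> b \<in> X \<and> (a, b) \<in> R)"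
| "guard_holds D \<eta> (GNot g) = (\<not> guard_holds D \<eta> g)"
| "guard_holds D \<eta> (GAnd g1 g2) = (guard_holds D \<eta> g1 \<and> guard_holds D \<eta> g2)"

fun term_vars :: "('v, 'd) gterm \<Rightarrow> 'v set" where
  "term_vars (Var v) = {v}" | "term_vars (Const d) = {}"
fun term_consts :: "('v, 'd) gterm \<Rightarrow> 'd set" where
  "term_consts (Var v) = {}" | "term_consts (Const d) = {d}"

fun guard_vars :: "('v, 'd) guard \<Rightarrow> 'v set" where
  "guard_vars GTrue = {}"
| "guard_vars (GDef v) = {v}"
| "guard_vars (GEq t1 t2) = term_vars t1 \<union> term_vars t2"
| "guard_vars (GLeq t1 t2) = term_vars t1 \<union> term_vars t2"
| "guard_vars (GNot g) = guard_vars g"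
| "guard_vars (GAnd g1 g2) = guard_vars g1 \<union> guard_vars g2"

fun guard_consts :: "('v, 'd) guard \<Rightarrow> 'd set" where
  "guard_consts GTrue = {}"
| "guard_consts (GDef v) = {}"
| "guard_consts (GEq t1 t2) = term_consts t1 \<union> term_consts t2"
| "guard_consts (GLeq t1 t2) = term_consts t1 \<union> term_consts t2"
| "guard_consts (GNot g) = guard_consts g"
| "guard_consts (GAnd g1 g2) = guard_consts g1 \<union> guard_consts g2"

section \<open>Workflow nets\<close>

record ('p, 't) wf_net =
  N_P     :: "'p set"
  N_T     :: "'t set"
  N_Fin   :: "('p \<times> 't) set"
  N_Fout  :: "('t \<times> 'p) set"
  N_start :: 'p
  N_sink  :: 'p

definition preset :: "('p, 't) wf_net \<Rightarrow> 't \<Rightarrow> 'p set" where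
  "preset N t = {p. (p, t) \<in> N_Fin N}"

definition postset :: "('p, 't) wf_net \<Rightarrow> 't \<Rightarrow> 'p set" where
  "postset N t = {p. (t, p) \<in> N_Fout N}"

definition net_edges :: "('p, 't) wf_net \<Rightarrow> ('p + 't) rel" where
  "net_edges N = {(Inl p, Inr t) | p t. (p, t) \<in> N_Fin N} \<union> {(Inr t, Inl p) | t p. (t, p) \<in> N_Fout N}"

definition net_nodes :: "('p, 't) wf_net \<Rightarrow> ('p + 't) set" where
  "net_nodes N = Inl ` N_P N \<union> Inr ` N_T N"

definition workflow_net :: "('p, 't) wf_net \<Rightarrow> bool" where
  "workflow_net N \<longleftrightarrow>
     finite (N_P N) \<and> finite (N_T N) \<and>
     N_Fin N \<subseteq> N_P N \<times> N_T N \<and> N_Fout N \<subseteq> N_T N \<times> N_P N \<and>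
     N_start N \<in> N_P N \<and> N_sink N \<in> N_P N \<and>
     (\<forall>t. (t, N_start N) \<notin> N_Fout N) \<and> (\<forall>t. (N_sink N, t) \<notin> N_Fin N) \<and>
     (\<forall>x\<in>net_nodes N. (Inl (N_start N), x) \<in> (net_edges N)\<^sup>* \<and> (x, Inl (N_sink N)) \<in> (net_edges N)\<^sup>*)"

section \<open>DAW-nets\<close>

record ('v, 'd, 'p, 't) dawnet =
  W_D  :: "('v, 'd) data_model"
  W_N  :: "('p, 't) wf_net"
  W_wr :: "'t \<Rightarrow> 'v \<rightharpoonup> 'd set"
  W_gd :: "'t \<Rightarrow> ('v, 'd) guard"

definition dawnet_ok :: "('v, 'd, 'p, 't) dawnet \<Rightarrow> bool" where
  "dawnet_ok W \<longleftrightarrow>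
     data_model_ok (W_D W) \<and> workflow_net (W_N W) \<and>
     (\<forall>t\<in>N_T (W_N W). dom (W_wr W t) \<subseteq> D_vars (W_D W) \<and>
        (\<forall>v S. W_wr W t v = Some S \<longrightarrow> S \<subseteq> D_dm (W_D W) v) \<and>
        guard_vars (W_gd W t) \<subseteq> D_vars (W_D W) \<and>
        guard_consts (W_gd W t) \<subseteq> \<Union> (D_doms (W_D W)))"

definition used_vars :: "('v, 'd, 'p, 't) dawnet \<Rightarrow> 'v set" where
  "used_vars W = (\<Union>t\<in>N_T (W_N W). dom (W_wr W t) \<union> guard_vars (W_gd W t))"

type_synonym ('v, 'd, 'p) dstate = "('p \<Rightarrow> nat) \<times> ('v \<rightharpoonup> 'd)"

definition valid_firing ::
  "('v, 'd, 'p, 't) dawnet \<Rightarrow> ('v, 'd, 'p) dstate \<Rightarrow> 't \<Rightarrow> ('v, 'd, 'p) dstate \<Rightarrow> bool" where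
  "valid_firing W s t s' \<longleftrightarrow>
     (let (M, \<eta>) = s; (M', \<eta>') = s'; N = W_N W in
       t \<in> N_T N \<and>
       preset N t \<subseteq> {p. M p > 0} \<and>
       guard_holds (W_D W) \<eta> (W_gd W t) \<and>
       (\<forall>p. M' p = (if p \<in> preset N t - postset N t then M p - 1
                     else if p \<in> postset N t - preset N t then M p + 1
                     else M p)) \<and>
       dom \<eta>' = (dom \<eta> \<union> {v. \<exists>S. W_wr W t v = Some S \<and> S \<noteq> {}}) - {v. W_wr W t v = Some {}} \<and>
       (\<forall>v S d. W_wr W t v = Some S \<longrightarrow> \<eta>' v = Some d \<longrightarrow> d \<in> S) \<and>
       (\<forall>v. v \<notin> dom (W_wr W t) \<longrightarrow> \<eta>' v = \<eta> v))"

definition init_state :: "('v, 'd, 'p, 't) dawnet \<Rightarrow> ('v, 'd, 'p) dstate" where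
  "init_state W = ((\<lambda>p. if p = N_start (W_N W) then 1 else 0), Map.empty)"

inductive_set rg_states :: "('v, 'd, 'p, 't) dawnet \<Rightarrow> ('v, 'd, 'p) dstate set"
  for W where
  rg_init: "init_state W \<in> rg_states W"
| rg_step: "s \<in> rg_states W \<Longrightarrow> valid_firing W s t s' \<Longrightarrow> s' \<in> rg_states W"

definition rg_delta :: "('v, 'd, 'p, 't) dawnet \<Rightarrow> (('v, 'd, 'p) dstate \<times> 't \<times> ('v, 'd, 'p) dstate) set" where
  "rg_delta W = {(s, t, s'). s \<in> rg_states W \<and> valid_firing W s t s'}"

definition one_safe :: "('v, 'd, 'p, 't) dawnet \<Rightarrow> bool" where
  "one_safe W \<longleftrightarrow> (\<forall>(M, \<eta>) \<in> rg_states W. \<forall>p. M p \<le> 1)"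

section \<open>Transition systems and trace equivalence\<close>

text \<open>A transition system is given by its set of states, its initial state and
  its set of labelled transitions.  A path is a list of states ss = s0..sn and a
  list of labels ls = l1..ln.\<close>
definition is_path :: "'s \<Rightarrow> ('s \<times> 'l \<times> 's) set \<Rightarrow> 's list \<Rightarrow> 'l list \<Rightarrow> bool" where
  "is_path s0 \<delta> ss ls \<longleftrightarrow> length ss = Suc (length ls) \<and> ss ! 0 = s0 \<and>
     (\<forall>i < length ls. (ss ! i, ls ! i, ss ! Suc i) \<in> \<delta>)"

definition trace_equivalent ::
  "'s1 set \<Rightarrow> 'l1 set \<Rightarrow> 's1 \<Rightarrow> ('s1 \<times> 'l1 \<times> 's1) set \<Rightarrow>
   's2 set \<Rightarrow> 'l2 set \<Rightarrow> 's2 \<Rightarrow> ('s2 \<times> 'l2 \<times> 's2) set \<Rightarrow> bool" where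
  "trace_equivalent S1 L1 i1 \<delta>1 S2 L2 i2 \<delta>2 \<longleftrightarrow>
    (\<exists>encS encL.
       inj_on encS S1 \<and> inj_on encL L1 \<and> encS ` S1 \<subseteq> S2 \<and> encL ` L1 \<subseteq> L2 \<and>
       (\<forall>ss ls. is_path i1 \<delta>1 ss ls \<longrightarrow> is_path i2 \<delta>2 (map encS ss) (map encL ls)) \<and>
       (\<forall>ss' ls'. is_path i2 \<delta>2 ss' ls' \<longrightarrow>
          (\<exists>ss ls. is_path i1 \<delta>1 ss ls \<and> map encS ss = ss' \<and> map encL ls = ls')))"

section \<open>State-variable planning\<close>

datatype ('sv, 'o, 'par) zterm = ZObj 'o | ZPar 'par | ZSV 'sv

datatype ('sv, 'o, 'par, 'rn) pform =
    FTrue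
  | FRel 'rn "('sv, 'o, 'par) zterm list"
  | FEq "('sv, 'o, 'par) zterm" "('sv, 'o, 'par) zterm"
  | FNot "('sv, 'o, 'par, 'rn) pform"
  | FAnd "('sv, 'o, 'par, 'rn) pform" "('sv, 'o, 'par, 'rn) pform"

text \<open>Planning states: partial maps from state variables to objects (defined
  exactly on the state variables of the problem).  A term is evaluated in the
  current state; parameters (which do not occur in ground actions) have no value.\<close>
fun zeval :: "('sv \<rightharpoonup> 'o) \<Rightarrow> ('sv, 'o, 'par) zterm \<Rightarrow> 'o option" where
  "zeval s (ZObj c) = Some c"
| "zeval s (ZPar x) = None"
| "zeval s (ZSV x) = s x"

fun pholds :: "('rn \<Rightarrow> 'o list set) \<Rightarrow> ('sv \<rightharpoonup> 'o) \<Rightarrow> ('sv, 'o, 'par, 'rn) pform \<Rightarrow> bool" where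
  "pholds I s FTrue = True"
| "pholds I s (FRel r zs) = (\<exists>os. those (map (zeval s) zs) = Some os \<and> os \<in> I r)"
| "pholds I s (FEq z1 z2) = (\<exists>c. zeval s z1 = Some c \<and> zeval s z2 = Some c)"
| "pholds I s (FNot f) = (\<not> pholds I s f)"
| "pholds I s (FAnd f g) = (pholds I s f \<and> pholds I s g)"

fun zsubst :: "('par \<Rightarrow> 'o) \<Rightarrow> ('sv, 'o, 'par) zterm \<Rightarrow> ('sv, 'o, 'par) zterm" where
  "zsubst \<sigma> (ZObj c) = ZObj c"
| "zsubst \<sigma> (ZPar x) = ZObj (\<sigma> x)"
| "zsubst \<sigma> (ZSV x) = ZSV x"

fun psubst :: "('par \<Rightarrow> 'o) \<Rightarrow> ('sv, 'o, 'par, 'rn) pform \<Rightarrow> ('sv, 'o, 'par, 'rn) pform" where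
  "psubst \<sigma> FTrue = FTrue"
| "psubst \<sigma> (FRel r zs) = FRel r (map (zsubst \<sigma>) zs)"
| "psubst \<sigma> (FEq z1 z2) = FEq (zsubst \<sigma> z1) (zsubst \<sigma> z2)"
| "psubst \<sigma> (FNot f) = FNot (psubst \<sigma> f)"
| "psubst \<sigma> (FAnd f g) = FAnd (psubst \<sigma> f) (psubst \<sigma> g)"

definition BigAnd :: "('sv, 'o, 'par, 'rn) pform set \<Rightarrow> ('sv, 'o, 'par, 'rn) pform" where
  "BigAnd A = foldr FAnd (SOME xs. set xs = A \<and> distinct xs) FTrue"

text \<open>Action templates: head name with parameters (each ranging over a finite
  set), precondition, effects (a set of assignments sv <- z, given as a partial
  map from state variables to terms).\<close>
record ('a, 'sv, 'o, 'par, 'rn) action_template =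
  act_name   :: 'a
  act_params :: "'par set"
  act_range  :: "'par \<Rightarrow> 'o set"
  act_pre    :: "('sv, 'o, 'par, 'rn) pform"
  act_eff    :: "'sv \<rightharpoonup> ('sv, 'o, 'par) zterm"

record ('a, 'sv, 'o, 'par, 'rn) ground_action =
  ga_name :: 'a
  ga_pre  :: "('sv, 'o, 'par, 'rn) pform"
  ga_eff  :: "'sv \<rightharpoonup> ('sv, 'o, 'par) zterm"

definition ground_actions ::
  "('a, 'sv, 'o, 'par, 'rn) action_template \<Rightarrow> ('a, 'sv, 'o, 'par, 'rn) ground_action set" where
  "ground_actions \<alpha> =
     {\<lparr>ga_name = act_name \<alpha>, ga_pre = psubst \<sigma> (act_pre \<alpha>),
       ga_eff = (\<lambda>x. map_option (zsubst \<sigma>) (act_eff \<alpha> x))\<rparr> | \<sigma>.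
        \<forall>x\<in>act_params \<alpha>. \<sigma> x \<in> act_range \<alpha> x}"

definition gamma ::
  "('rn \<Rightarrow> 'o list set) \<Rightarrow> ('sv \<rightharpoonup> 'o) \<Rightarrow> ('a, 'sv, 'o, 'par, 'rn) ground_action \<Rightarrow> ('sv \<rightharpoonup> 'o) option" where
  "gamma I s a = (if pholds I s (ga_pre a)
     then Some (\<lambda>x. case ga_eff a x of Some z \<Rightarrow> zeval s z | None \<Rightarrow> s x)
     else None)"

section \<open>The encoding pddl(W)\<close>

datatype 'd obj = Val 'd | Null | OTrue | OFalse

datatype ('v, 'p) svar = SVar 'v | SPlace 'p

datatype ('t, 'v) rname = OrdRel | WrRel 't 'v

type_synonym ('v, 'd, 'p, 't) pddl_pform = "(('v, 'p) svar, 'd obj, 'v, ('t, 'v) rname) pform"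
type_synonym ('v, 'd, 'p) pstate = "('v, 'p) svar \<rightharpoonup> 'd obj"

definition pddl_objects :: "('v, 'd, 'p, 't) dawnet \<Rightarrow> 'd obj set" where
  "pddl_objects W = Val ` \<Union> (D_doms (W_D W)) \<union> {Null, OTrue, OFalse}"

definition pddl_rigid :: "('v, 'd, 'p, 't) dawnet \<Rightarrow> ('t, 'v) rname \<Rightarrow> 'd obj list set" where
  "pddl_rigid W r = (case r of
      OrdRel \<Rightarrow> {[Val a, Val b] | a b. \<exists>X R. X \<in> D_doms (W_D W) \<and> D_ord (W_D W) X = Some R \<and>
                                        a \<in> X \<and> b \<in> X \<and> (a, b) \<in> R}
    | WrRel t v \<Rightarrow> (case W_wr W t v of
                      None \<Rightarrow> {}
                    | Some S \<Rightarrow> if S \<noteq> {} then {[Val a] | a. a \<in> S} else {[Null]}))"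

fun tr_term :: "('v, 'd) gterm \<Rightarrow> (('v, 'p) svar, 'd obj, 'v) zterm" where
  "tr_term (Var v) = ZSV (SVar v)"
| "tr_term (Const d) = ZObj (Val d)"

fun tr_guard :: "('v, 'd) guard \<Rightarrow> ('v, 'd, 'p, 't) pddl_pform" where
  "tr_guard GTrue = FTrue"
| "tr_guard (GDef v) = FNot (FEq (ZSV (SVar v)) (ZObj Null))"
| "tr_guard (GEq t1 t2) = FAnd (FNot (FEq (tr_term t1) (ZObj Null))) (FEq (tr_term t1) (tr_term t2))"
| "tr_guard (GLeq t1 t2) = FRel OrdRel [tr_term t1, tr_term t2]"
| "tr_guard (GNot g) = FNot (tr_guard g)"
| "tr_guard (GAnd g1 g2) = FAnd (tr_guard g1) (tr_guard g2)"

definition pddl_template ::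
  "('v, 'd, 'p, 't) dawnet \<Rightarrow> 't \<Rightarrow> ('t, ('v, 'p) svar, 'd obj, 'v, ('t, 'v) rname) action_template" where
  "pddl_template W t =
     \<lparr>act_name = t,
      act_params = dom (W_wr W t),
      act_range = (\<lambda>_. pddl_objects W),
      act_pre = FAnd (tr_guard (W_gd W t))
                 (FAnd (BigAnd {FRel (WrRel t v) [ZPar v] | v. v \<in> dom (W_wr W t)})
                       (BigAnd {FEq (ZSV (SPlace p)) (ZObj OTrue) | p. p \<in> preset (W_N W) t})),
      act_eff = (\<lambda>x. case x of
                   SVar v \<Rightarrow> if v \<in> dom (W_wr W t) then Some (ZPar v) else None
                 | SPlace p \<Rightarrow> if p \<in> postset (W_N W) t then Some (ZObj OTrue)
                               else if p \<in> preset (W_N W) t then Some (ZObj OFalse)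
                               else None)\<rparr>"

definition Psi :: "('v, 'd, 'p, 't) dawnet \<Rightarrow> ('v, 'd, 'p) dstate \<Rightarrow> ('v, 'd, 'p) pstate" where
  "Psi W s = (\<lambda>x. case x of
      SVar v \<Rightarrow> if v \<in> used_vars W then (case snd s v of Some d \<Rightarrow> Some (Val d) | None \<Rightarrow> Some Null) else None
    | SPlace p \<Rightarrow> if p \<in> N_P (W_N W) then Some (if fst s p > 0 then OTrue else OFalse) else None)"

inductive_set pddl_states :: "('v, 'd, 'p, 't) dawnet \<Rightarrow> ('v, 'd, 'p) pstate set"
  for W where
  ps_init: "Psi W (init_state W) \<in> pddl_states W"
| ps_step: "s \<in> pddl_states W \<Longrightarrow> t \<in> N_T (W_N W) \<Longrightarrow> a \<in> ground_actions (pddl_template W t) \<Longrightarrow>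
            gamma (pddl_rigid W) s a = Some s' \<Longrightarrow> s' \<in> pddl_states W"

definition pddl_delta :: "('v, 'd, 'p, 't) dawnet \<Rightarrow> (('v, 'd, 'p) pstate \<times> 't \<times> ('v, 'd, 'p) pstate) set" where
  "pddl_delta W = {(s, t, s'). s \<in> pddl_states W \<and> s' \<in> pddl_states W \<and> t \<in> N_T (W_N W) \<and>
                     (\<exists>a \<in> ground_actions (pddl_template W t). gamma (pddl_rigid W) s a = Some s')}"

end

theory Submission
  imports Defs
begin


lemma BigAnd_holds:
  assumes "finite A"
  shows "pholds I s (psubst \<sigma> (BigAnd A)) \<longleftrightarrow> (\<forall>f\<in>A. pholds I s (psubst \<sigma> f))"
proof -
  have ex: "\<exists>xs. set xs = A \<and> distinct xs" using finite_distinct_list[OF assms] .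
  define xs where "xs = (SOME xs. set xs = A \<and> distinct xs)"
  have xs: "set xs = A" using someI_ex[OF ex] unfolding xs_def by blast
  have "pholds I s (psubst \<sigma> (foldr FAnd ys FTrue)) \<longleftrightarrow> (\<forall>f\<in>set ys. pholds I s (psubst \<sigma> f))" for ys
    by (induction ys) auto
  then show ?thesis unfolding BigAnd_def xs_def[symmetric] using xs by simp
qed

lemma zsubst_tr_term: "zsubst \<sigma> (tr_term t) = tr_term t"
  by (cases t) auto

lemma psubst_tr_guard: "psubst \<sigma> (tr_guard g) = tr_guard g"
  by (induction g) (auto simp: zsubst_tr_term)

lemma tr_guard_holds:
  assumes "guard_vars g \<subseteq> used_vars W"
  shows "pholds (pddl_rigid W) (Psi W (M, \<eta>)) (tr_guard g) \<longleftrightarrow> guard_holds (W_D W) \<eta> g"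
  using assms
proof (induction g)
  case (GEq t1 t2)
  then show ?case
    by (cases t1; cases t2) (auto simp: Psi_def split: option.splits)
next
  case (GLeq t1 t2)
  then show ?case
    by (cases t1; cases t2) (auto simp: Psi_def pddl_rigid_def split: option.splits)
qed (auto simp: Psi_def split: option.splits)



lemma ok_facts_t:
  assumes "dawnet_ok W"
  shows "preset (W_N W) t \<subseteq> N_P (W_N W)" "postset (W_N W) t \<subseteq> N_P (W_N W)"
  using assms unfolding dawnet_ok_def workflow_net_def preset_def postset_def by auto

lemma ok_facts:
  assumes "dawnet_ok W"
  shows "finite (N_P (W_N W))" "N_start (W_N W) \<in> N_P (W_N W)"
  using assms unfolding dawnet_ok_def workflow_net_def preset_def postset_def by auto

lemma used_facts:
  assumes "t \<in> N_T (W_N W)"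
  shows "dom (W_wr W t) \<subseteq> used_vars W" "guard_vars (W_gd W t) \<subseteq> used_vars W"
  using assms unfolding used_vars_def by auto

lemma rg_inv:
  assumes "dawnet_ok W" "s \<in> rg_states W"
  shows "(\<forall>p. p \<notin> N_P (W_N W) \<longrightarrow> fst s p = 0) \<and> (\<forall>v. v \<notin> used_vars W \<longrightarrow> snd s v = None)"
  using assms(2)
proof induction
  case rg_init
  then show ?case using ok_facts[OF assms(1)] by (auto simp: init_state_def)
next
  case (rg_step s t s')
  obtain M \<eta> M' \<eta>' where s: "s = (M, \<eta>)" "s' = (M', \<eta>')" by (cases s; cases s') auto
  have vf: "t \<in> N_T (W_N W)"
    "\<forall>p. M' p = (if p \<in> preset (W_N W) t - postset (W_N W) t then M p - 1
                     else if p \<in> postset (W_N W) t - preset (W_N W) t then M p + 1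
                     else M p)"
    "\<forall>v. v \<notin> dom (W_wr W t) \<longrightarrow> \<eta>' v = \<eta> v"
    using rg_step unfolding s by (auto simp: valid_firing_def Let_def)
  have "\<forall>p. p \<notin> N_P (W_N W) \<longrightarrow> M' p = 0"
    using rg_step vf ok_facts_t[OF assms(1), of t] s by auto
  moreover have "\<forall>v. v \<notin> used_vars W \<longrightarrow> \<eta>' v = None"
  proof (intro allI impI)
    fix v assume v: "v \<notin> used_vars W"
    then have "v \<notin> dom (W_wr W t)" using used_facts[OF vf(1)] by blast
    then show "\<eta>' v = None" using vf(3) v rg_step s by auto
  qed
  ultimately show ?case using s by simp
qed

lemma rg_safe:
  assumes "one_safe W" "(M, \<eta>) \<in> rg_states W"
  shows "M p \<le> 1"
  using assms unfolding one_safe_def by auto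

lemma Psi_inj:
  assumes "dawnet_ok W" "one_safe W"
  shows "inj_on (Psi W) (rg_states W)"
proof (rule inj_onI)
  fix s1 s2 assume s1: "s1 \<in> rg_states W" and s2: "s2 \<in> rg_states W" and eq: "Psi W s1 = Psi W s2"
  obtain M1 \<eta>1 M2 \<eta>2 where s: "s1 = (M1, \<eta>1)" "s2 = (M2, \<eta>2)" by (cases s1; cases s2) auto
  note i1 = rg_inv[OF assms(1) s1] and i2 = rg_inv[OF assms(1) s2]
  have "M1 = M2"
  proof
    fix p
    show "M1 p = M2 p"
    proof (cases "p \<in> N_P (W_N W)")
      case True
      have "Psi W s1 (SPlace p) = Psi W s2 (SPlace p)" using eq by simp
      then have "(M1 p > 0) = (M2 p > 0)" using True s by (auto simp: Psi_def split: if_splits)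
      moreover have "M1 p \<le> 1" "M2 p \<le> 1" using rg_safe[OF assms(2)] s1 s2 s by auto
      ultimately show ?thesis by linarith
    next
      case False
      then show ?thesis using i1 i2 s by auto
    qed
  qed
  moreover have "\<eta>1 = \<eta>2"
  proof
    fix v
    show "\<eta>1 v = \<eta>2 v"
    proof (cases "v \<in> used_vars W")
      case True
      have "Psi W s1 (SVar v) = Psi W s2 (SVar v)" using eq by simp
      then show ?thesis using True s by (auto simp: Psi_def split: option.splits)
    next
      case False
      then show ?thesis using i1 i2 s by auto
    qed
  qed
  ultimately show "s1 = s2" using s by simp
qed



definition wrok where
  "wrok W t \<sigma> v \<longleftrightarrow> (case W_wr W t v of None \<Rightarrow> False
      | Some S \<Rightarrow> if S \<noteq> {} then (\<exists>a\<in>S. \<sigma> v = Val a) else \<sigma> v = Null)"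

lemma pre_iff:
  fixes W :: "('v, 'd, 'p, 't) dawnet"
  assumes ok: "dawnet_ok W" and fin: "finite (used_vars W)" and t: "t \<in> N_T (W_N W)"
  shows "pholds (pddl_rigid W) (Psi W (M, \<eta>)) (psubst \<sigma> (act_pre (pddl_template W t))) \<longleftrightarrow>
     guard_holds (W_D W) \<eta> (W_gd W t) \<and> (\<forall>v\<in>dom (W_wr W t). wrok W t \<sigma> v) \<and>
     (\<forall>p\<in>preset (W_N W) t. M p > 0)"
proof -
  let ?A1 = "{FRel (WrRel t v) [ZPar v] | v. v \<in> dom (W_wr W t)} :: ('v, 'd, 'p, 't) pddl_pform set"
  let ?A2 = "{FEq (ZSV (SPlace p)) (ZObj OTrue) | p. p \<in> preset (W_N W) t} :: ('v, 'd, 'p, 't) pddl_pform set"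
  have f1: "finite ?A1"
  proof -
    have "?A1 = (\<lambda>v. FRel (WrRel t v) [ZPar v]) ` dom (W_wr W t)" by auto
    moreover have "finite (dom (W_wr W t))" using used_facts[OF t] fin finite_subset by blast
    ultimately show ?thesis by simp
  qed
  have f2: "finite ?A2"
  proof -
    have "?A2 = (\<lambda>p. FEq (ZSV (SPlace p)) (ZObj OTrue)) ` preset (W_N W) t" by auto
    moreover have "finite (preset (W_N W) t)" using ok_facts_t[OF ok] ok_facts[OF ok] finite_subset by blast
    ultimately show ?thesis by simp
  qed
  have g: "pholds (pddl_rigid W) (Psi W (M, \<eta>)) (psubst \<sigma> (tr_guard (W_gd W t))) \<longleftrightarrow> guard_holds (W_D W) \<eta> (W_gd W t)"
    unfolding psubst_tr_guard using tr_guard_holds used_facts[OF t] by blast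
  have a1: "pholds (pddl_rigid W) (Psi W (M, \<eta>)) (psubst \<sigma> (BigAnd ?A1)) \<longleftrightarrow> (\<forall>v\<in>dom (W_wr W t). wrok W t \<sigma> v)"
  proof -
    have e: "pholds (pddl_rigid W) (Psi W (M, \<eta>)) (psubst \<sigma> (FRel (WrRel t v) [ZPar v])) \<longleftrightarrow> wrok W t \<sigma> v"
      if vd: "v \<in> dom (W_wr W t)" for v
    proof -
      obtain S where S: "W_wr W t v = Some S" using vd by auto
      show ?thesis by (cases "S = {}") (auto simp: pddl_rigid_def wrok_def S)
    qed
    show ?thesis unfolding BigAnd_holds[OF f1] using e by blast
  qed
  have a2: "pholds (pddl_rigid W) (Psi W (M, \<eta>)) (psubst \<sigma> (BigAnd ?A2)) \<longleftrightarrow> (\<forall>p\<in>preset (W_N W) t. M p > 0)"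
  proof -
    have e: "pholds (pddl_rigid W) (Psi W (M, \<eta>)) (psubst \<sigma> (FEq (ZSV (SPlace p)) (ZObj OTrue))) \<longleftrightarrow> M p > 0"
      if pd: "p \<in> preset (W_N W) t" for p
      using pd ok_facts_t[OF ok, of t] by (auto simp: Psi_def)
    show ?thesis unfolding BigAnd_holds[OF f2] using e by blast
  qed
  show ?thesis unfolding pddl_template_def using g a1 a2 by simp
qed



lemma vf_unfold:
  assumes "valid_firing W (M, \<eta>) t (M', \<eta>')"
  shows "t \<in> N_T (W_N W)" "preset (W_N W) t \<subseteq> {p. M p > 0}"
    "guard_holds (W_D W) \<eta> (W_gd W t)"
    "\<And>p. M' p = (if p \<in> preset (W_N W) t - postset (W_N W) t then M p - 1
                     else if p \<in> postset (W_N W) t - preset (W_N W) t then M p + 1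
                     else M p)"
    "dom \<eta>' = (dom \<eta> \<union> {v. \<exists>S. W_wr W t v = Some S \<and> S \<noteq> {}}) - {v. W_wr W t v = Some {}}"
    "\<And>v S d. W_wr W t v = Some S \<Longrightarrow> \<eta>' v = Some d \<Longrightarrow> d \<in> S"
    "\<And>v. v \<notin> dom (W_wr W t) \<Longrightarrow> \<eta>' v = \<eta> v"
  using assms unfolding valid_firing_def Let_def by auto

lemma gamma_eq:
  fixes W :: "('v, 'd, 'p, 't) dawnet"
  assumes ok: "dawnet_ok W" and safe: "one_safe W" and rs: "(M, \<eta>) \<in> rg_states W"
    and vf: "valid_firing W (M, \<eta>) t (M', \<eta>')"
    and sig: "\<forall>v\<in>dom (W_wr W t). \<sigma> v = (case \<eta>' v of Some d \<Rightarrow> Val d | None \<Rightarrow> Null)"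
  shows "(\<lambda>x. case map_option (zsubst \<sigma>) (act_eff (pddl_template W t) x) of
            Some z \<Rightarrow> zeval (Psi W (M, \<eta>)) z | None \<Rightarrow> Psi W (M, \<eta>) x) = Psi W (M', \<eta>')"
proof
  fix x
  note V = vf_unfold[OF vf]
  note U = used_facts[OF V(1)]
  note P = ok_facts_t[OF ok, of t]
  show "(case map_option (zsubst \<sigma>) (act_eff (pddl_template W t) x) of
            Some z \<Rightarrow> zeval (Psi W (M, \<eta>)) z | None \<Rightarrow> Psi W (M, \<eta>) x) = Psi W (M', \<eta>') x"
  proof (cases x)
    case (SVar v)
    show ?thesis
    proof (cases "v \<in> dom (W_wr W t)")
      case True
      then have "v \<in> used_vars W" using U by blast
      then show ?thesis using True sig SVar by (auto simp: pddl_template_def Psi_def split: option.splits)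
    next
      case False
      then show ?thesis using V(7)[OF False] SVar by (auto simp: pddl_template_def Psi_def)
    qed
  next
    case (SPlace p)
    have le: "M p \<le> 1" using rg_safe[OF safe rs] .
    have m: "M' p = (if p \<in> preset (W_N W) t - postset (W_N W) t then M p - 1
                     else if p \<in> postset (W_N W) t - preset (W_N W) t then M p + 1
                     else M p)" using V(4) .
    show ?thesis
    proof (cases "p \<in> postset (W_N W) t")
      case True
      then have "p \<in> N_P (W_N W)" using P by blast
      moreover have "M' p > 0" using m True V(2) by (auto split: if_splits)
      ultimately show ?thesis using True SPlace by (auto simp: pddl_template_def Psi_def)
    next
      case F1: False
      show ?thesis
      proof (cases "p \<in> preset (W_N W) t")
        case True
        then have "p \<in> N_P (W_N W)" using P by blast
        moreover have "M' p = 0" using m True F1 le by auto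
        ultimately show ?thesis using True F1 SPlace by (auto simp: pddl_template_def Psi_def)
      next
        case False
        then have "M' p = M p" using m F1 by auto
        then show ?thesis using False F1 SPlace by (auto simp: pddl_template_def Psi_def)
      qed
    qed
  qed
qed

lemma ga_elim:
  assumes "a \<in> ground_actions (pddl_template W t)"
  obtains \<sigma> where "\<forall>x\<in>dom (W_wr W t). \<sigma> x \<in> pddl_objects W"
    "a = \<lparr>ga_name = t, ga_pre = psubst \<sigma> (act_pre (pddl_template W t)),
       ga_eff = (\<lambda>x. map_option (zsubst \<sigma>) (act_eff (pddl_template W t) x))\<rparr>"
  using assms unfolding ground_actions_def by (auto simp: pddl_template_def)

lemma ga_intro:
  assumes "\<forall>x\<in>dom (W_wr W t). \<sigma> x \<in> pddl_objects W"
  shows "\<lparr>ga_name = t, ga_pre = psubst \<sigma> (act_pre (pddl_template W t)),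
       ga_eff = (\<lambda>x. map_option (zsubst \<sigma>) (act_eff (pddl_template W t) x))\<rparr>
     \<in> ground_actions (pddl_template W t)"
  using assms unfolding ground_actions_def by (auto simp: pddl_template_def)



lemma ok_wr:
  assumes "dawnet_ok W" "t \<in> N_T (W_N W)"
  shows "\<And>x S. W_wr W t x = Some S \<Longrightarrow> S \<subseteq> D_dm (W_D W) x"
    "\<And>x. x \<in> dom (W_wr W t) \<Longrightarrow> D_dm (W_D W) x \<in> D_doms (W_D W)"
proof -
  have d: "\<forall>t\<in>N_T (W_N W). dom (W_wr W t) \<subseteq> D_vars (W_D W) \<and>
        (\<forall>v S. W_wr W t v = Some S \<longrightarrow> S \<subseteq> D_dm (W_D W) v)"
    and m: "data_model_ok (W_D W)"
    using assms(1) unfolding dawnet_ok_def by auto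
  from m have mv: "\<forall>v\<in>D_vars (W_D W). D_dm (W_D W) v \<in> D_doms (W_D W)"
    unfolding data_model_ok_def by auto
  show "\<And>x S. W_wr W t x = Some S \<Longrightarrow> S \<subseteq> D_dm (W_D W) x" using d assms(2) by auto
  show "\<And>x. x \<in> dom (W_wr W t) \<Longrightarrow> D_dm (W_D W) x \<in> D_doms (W_D W)"
    using d assms(2) mv by blast
qed

lemma fwd:
  fixes W :: "('v, 'd, 'p, 't) dawnet"
  assumes ok: "dawnet_ok W" and safe: "one_safe W" and fin: "finite (used_vars W)"
    and rs: "(M, \<eta>) \<in> rg_states W"
    and vf: "valid_firing W (M, \<eta>) t (M', \<eta>')"
  shows "\<exists>a\<in>ground_actions (pddl_template W t). gamma (pddl_rigid W) (Psi W (M, \<eta>)) a = Some (Psi W (M', \<eta>'))"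
proof -
  note V = vf_unfold[OF vf]
  define \<sigma> where "\<sigma> v = (case \<eta>' v of Some d \<Rightarrow> Val d | None \<Rightarrow> Null)" for v
  have obj: "\<forall>x\<in>dom (W_wr W t). \<sigma> x \<in> pddl_objects W"
  proof
    fix x assume x: "x \<in> dom (W_wr W t)"
    then obtain S where S: "W_wr W t x = Some S" by auto
    show "\<sigma> x \<in> pddl_objects W"
    proof (cases "\<eta>' x")
      case None
      then show ?thesis by (simp add: \<sigma>_def pddl_objects_def)
    next
      case (Some d)
      have "d \<in> S" using V(6)[OF S Some] .
      moreover have "S \<subseteq> D_dm (W_D W) x" using ok_wr(1)[OF ok V(1) S] .
      moreover have "D_dm (W_D W) x \<in> D_doms (W_D W)" using ok_wr(2)[OF ok V(1) x] .
      ultimately show ?thesis using Some by (auto simp: \<sigma>_def pddl_objects_def)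
    qed
  qed
  have wr: "\<forall>v\<in>dom (W_wr W t). wrok W t \<sigma> v"
  proof
    fix v assume v: "v \<in> dom (W_wr W t)"
    then obtain S where S: "W_wr W t v = Some S" by auto
    show "wrok W t \<sigma> v"
    proof (cases "S = {}")
      case True
      then have "v \<notin> dom \<eta>'" using V(5) S by auto
      then have "\<eta>' v = None" by auto
      then show ?thesis using True S by (auto simp: wrok_def \<sigma>_def)
    next
      case False
      then have "v \<in> dom \<eta>'" using V(5) S by auto
      then obtain d where d: "\<eta>' v = Some d" by auto
      then have "d \<in> S" using V(6)[OF S] by blast
      then show ?thesis using False S d by (auto simp: wrok_def \<sigma>_def)
    qed
  qed
  have pre: "pholds (pddl_rigid W) (Psi W (M, \<eta>)) (psubst \<sigma> (act_pre (pddl_template W t)))"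
    using pre_iff[OF ok fin V(1)] V(2,3) wr by auto
  have geq: "(\<lambda>x. case map_option (zsubst \<sigma>) (act_eff (pddl_template W t) x) of
            Some z \<Rightarrow> zeval (Psi W (M, \<eta>)) z | None \<Rightarrow> Psi W (M, \<eta>) x) = Psi W (M', \<eta>')"
    by (rule gamma_eq[OF ok safe rs vf]) (simp add: \<sigma>_def)
  show ?thesis
    apply (rule bexI[OF _ ga_intro[OF obj]])
    using pre geq by (simp add: gamma_def)
qed

lemma vf_intro:
  assumes "t \<in> N_T (W_N W)" "preset (W_N W) t \<subseteq> {p. M p > 0}"
    "guard_holds (W_D W) \<eta> (W_gd W t)"
    "\<forall>p. M' p = (if p \<in> preset (W_N W) t - postset (W_N W) t then M p - 1
                     else if p \<in> postset (W_N W) t - preset (W_N W) t then M p + 1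
                     else M p)"
    "dom \<eta>' = (dom \<eta> \<union> {v. \<exists>S. W_wr W t v = Some S \<and> S \<noteq> {}}) - {v. W_wr W t v = Some {}}"
    "\<forall>v S d. W_wr W t v = Some S \<longrightarrow> \<eta>' v = Some d \<longrightarrow> d \<in> S"
    "\<forall>v. v \<notin> dom (W_wr W t) \<longrightarrow> \<eta>' v = \<eta> v"
  shows "valid_firing W (M, \<eta>) t (M', \<eta>')"
  using assms unfolding valid_firing_def Let_def by simp

lemma bwd:
  fixes W :: "('v, 'd, 'p, 't) dawnet"
  assumes ok: "dawnet_ok W" and safe: "one_safe W" and fin: "finite (used_vars W)"
    and rs: "(M, \<eta>) \<in> rg_states W" and t: "t \<in> N_T (W_N W)"
    and a: "a \<in> ground_actions (pddl_template W t)"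
    and g: "gamma (pddl_rigid W) (Psi W (M, \<eta>)) a = Some s2"
  shows "\<exists>s'. valid_firing W (M, \<eta>) t s' \<and> Psi W s' = s2"
proof -
  obtain \<sigma> where obj: "\<forall>x\<in>dom (W_wr W t). \<sigma> x \<in> pddl_objects W"
    and aeq: "a = \<lparr>ga_name = t, ga_pre = psubst \<sigma> (act_pre (pddl_template W t)),
       ga_eff = (\<lambda>x. map_option (zsubst \<sigma>) (act_eff (pddl_template W t) x))\<rparr>"
    using ga_elim[OF a] by blast
  have pre: "pholds (pddl_rigid W) (Psi W (M, \<eta>)) (psubst \<sigma> (act_pre (pddl_template W t)))"
    and s2: "s2 = (\<lambda>x. case map_option (zsubst \<sigma>) (act_eff (pddl_template W t) x) of
            Some z \<Rightarrow> zeval (Psi W (M, \<eta>)) z | None \<Rightarrow> Psi W (M, \<eta>) x)"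
    using g unfolding aeq gamma_def by (auto split: if_splits)
  have gd: "guard_holds (W_D W) \<eta> (W_gd W t)" and wr: "\<forall>v\<in>dom (W_wr W t). wrok W t \<sigma> v"
    and pp: "\<forall>p\<in>preset (W_N W) t. M p > 0"
    using pre pre_iff[OF ok fin t] by auto
  define M' where "M' p = (if p \<in> preset (W_N W) t - postset (W_N W) t then M p - 1
                     else if p \<in> postset (W_N W) t - preset (W_N W) t then M p + 1
                     else M p)" for p
  define \<eta>' where "\<eta>' v = (if v \<in> dom (W_wr W t) then (case \<sigma> v of Val d \<Rightarrow> Some d | _ \<Rightarrow> None) else \<eta> v)" for v
  have wr2: "\<And>v S. W_wr W t v = Some S \<Longrightarrow> (S \<noteq> {} \<longrightarrow> (\<exists>d\<in>S. \<sigma> v = Val d)) \<and> (S = {} \<longrightarrow> \<sigma> v = Null)"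
  proof -
    fix v S assume S: "W_wr W t v = Some S"
    then have "v \<in> dom (W_wr W t)" by auto
    then have "wrok W t \<sigma> v" using wr by blast
    then show "(S \<noteq> {} \<longrightarrow> (\<exists>d\<in>S. \<sigma> v = Val d)) \<and> (S = {} \<longrightarrow> \<sigma> v = Null)"
      unfolding wrok_def S by auto
  qed
  have ein: "\<And>v S. W_wr W t v = Some S \<Longrightarrow> \<eta>' v = (case \<sigma> v of Val d \<Rightarrow> Some d | _ \<Rightarrow> None)"
  proof -
    fix v S assume "W_wr W t v = Some S"
    then have "v \<in> dom (W_wr W t)" by (simp add: domIff)
    then show "\<eta>' v = (case \<sigma> v of Val d \<Rightarrow> Some d | _ \<Rightarrow> None)" unfolding \<eta>'_def by simp
  qed
  have dom_eq: "dom \<eta>' = (dom \<eta> \<union> {v. \<exists>S. W_wr W t v = Some S \<and> S \<noteq> {}}) - {v. W_wr W t v = Some {}}"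
  proof (rule set_eqI)
    fix v
    show "v \<in> dom \<eta>' \<longleftrightarrow> v \<in> (dom \<eta> \<union> {v. \<exists>S. W_wr W t v = Some S \<and> S \<noteq> {}}) - {v. W_wr W t v = Some {}}"
    proof (cases "W_wr W t v")
      case None
      then have "\<eta>' v = \<eta> v" by (auto simp: \<eta>'_def)
      then show ?thesis using None by (auto simp: domIff)
    next
      case (Some S)
      then show ?thesis using wr2[OF Some] ein[OF Some] by (cases "S = {}") auto
    qed
  qed
  have vals: "\<forall>v S d. W_wr W t v = Some S \<longrightarrow> \<eta>' v = Some d \<longrightarrow> d \<in> S"
  proof (intro allI impI)
    fix v S d assume S: "W_wr W t v = Some S" and d: "\<eta>' v = Some d"
    show "d \<in> S" using wr2[OF S] d S ein[OF S] by (cases "S = {}") auto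
  qed
  have vf: "valid_firing W (M, \<eta>) t (M', \<eta>')"
  proof -
    have a1: "\<forall>p. M' p = (if p \<in> preset (W_N W) t - postset (W_N W) t then M p - 1
                     else if p \<in> postset (W_N W) t - preset (W_N W) t then M p + 1
                     else M p)" unfolding M'_def by blast
    have a2: "\<forall>v. v \<notin> dom (W_wr W t) \<longrightarrow> \<eta>' v = \<eta> v" unfolding \<eta>'_def by simp
    have a3: "preset (W_N W) t \<subseteq> {p. M p > 0}" using pp by blast
    show ?thesis by (rule vf_intro[OF t a3 gd a1 dom_eq vals a2])
  qed
  have sig: "\<forall>v\<in>dom (W_wr W t). \<sigma> v = (case \<eta>' v of Some d \<Rightarrow> Val d | None \<Rightarrow> Null)"
  proof
    fix v assume v: "v \<in> dom (W_wr W t)"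
    then obtain S where S: "W_wr W t v = Some S" by auto
    show "\<sigma> v = (case \<eta>' v of Some d \<Rightarrow> Val d | None \<Rightarrow> Null)"
      using wr2[OF S] ein[OF S] by (cases "S = {}") auto
  qed
  have "Psi W (M', \<eta>') = s2" using gamma_eq[OF ok safe rs vf sig] s2 by simp
  then show ?thesis using vf by blast
qed



lemma Psi_into:
  fixes W :: "('v, 'd, 'p, 't) dawnet"
  assumes ok: "dawnet_ok W" and safe: "one_safe W" and fin: "finite (used_vars W)"
    and s: "s \<in> rg_states W"
  shows "Psi W s \<in> pddl_states W"
  using s
proof induction
  case rg_init
  then show ?case by (rule ps_init)
next
  case (rg_step s t s')
  obtain M \<eta> M' \<eta>' where e: "s = (M, \<eta>)" "s' = (M', \<eta>')" by (cases s; cases s') auto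
  have vf: "valid_firing W (M, \<eta>) t (M', \<eta>')" using rg_step e by simp
  have rs: "(M, \<eta>) \<in> rg_states W" using rg_step e by simp
  obtain a where a: "a \<in> ground_actions (pddl_template W t)"
    and g: "gamma (pddl_rigid W) (Psi W (M, \<eta>)) a = Some (Psi W (M', \<eta>'))"
    using fwd[OF ok safe fin rs vf] by blast
  have "Psi W (M, \<eta>) \<in> pddl_states W" using rg_step e by simp
  from ps_step[OF this vf_unfold(1)[OF vf] a g] show ?case using e by simp
qed

lemma path_states:
  assumes p: "is_path (init_state W) (rg_delta W) ss ls" and i: "i < length ss"
  shows "ss ! i \<in> rg_states W"
proof (cases i)
  case 0
  then show ?thesis using p by (simp add: is_path_def rg_init)
next
  case (Suc j)
  then have "j < length ls" using p i by (simp add: is_path_def)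
  then have "(ss ! j, ls ! j, ss ! Suc j) \<in> rg_delta W" using p by (simp add: is_path_def)
  then show ?thesis using Suc by (auto simp: rg_delta_def intro: rg_step)
qed

lemma fwd_path:
  fixes W :: "('v, 'd, 'p, 't) dawnet"
  assumes ok: "dawnet_ok W" and safe: "one_safe W" and fin: "finite (used_vars W)"
    and p: "is_path (init_state W) (rg_delta W) ss ls"
  shows "is_path (Psi W (init_state W)) (pddl_delta W) (map (Psi W) ss) (map id ls)"
proof -
  have len: "length ss = Suc (length ls)" and h0: "ss ! 0 = init_state W"
    and st: "\<forall>i<length ls. (ss ! i, ls ! i, ss ! Suc i) \<in> rg_delta W"
    using p by (auto simp: is_path_def)
  have "(Psi W (ss ! i), ls ! i, Psi W (ss ! Suc i)) \<in> pddl_delta W" if i: "i < length ls" for i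
  proof -
    have d: "(ss ! i, ls ! i, ss ! Suc i) \<in> rg_delta W" using st i by blast
    obtain M \<eta> M' \<eta>' where e: "ss ! i = (M, \<eta>)" "ss ! Suc i = (M', \<eta>')"
      by (cases "ss ! i"; cases "ss ! Suc i") auto
    have rs: "(M, \<eta>) \<in> rg_states W" and vf: "valid_firing W (M, \<eta>) (ls ! i) (M', \<eta>')"
      using d e by (auto simp: rg_delta_def)
    have rs': "(M', \<eta>') \<in> rg_states W" using rg_step[OF rs vf] .
    show ?thesis
      using fwd[OF ok safe fin rs vf] Psi_into[OF ok safe fin rs] Psi_into[OF ok safe fin rs']
        vf_unfold(1)[OF vf] e by (auto simp: pddl_delta_def)
  qed
  then show ?thesis using len h0 by (auto simp: is_path_def)
qed

lemma bwd_path: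
  fixes W :: "('v, 'd, 'p, 't) dawnet"
  assumes ok: "dawnet_ok W" and safe: "one_safe W" and fin: "finite (used_vars W)"
  shows "is_path (Psi W (init_state W)) (pddl_delta W) ss' ls' \<Longrightarrow>
     \<exists>ss. is_path (init_state W) (rg_delta W) ss ls' \<and> map (Psi W) ss = ss'"
proof (induction ls' arbitrary: ss' rule: rev_induct)
  case Nil
  then have "ss' = [Psi W (init_state W)]"
    by (cases ss') (auto simp: is_path_def)
  then show ?case by (intro exI[of _ "[init_state W]"]) (auto simp: is_path_def)
next
  case (snoc t ls ss')
  let ?n = "length ls"
  have len: "length ss' = Suc (Suc ?n)" and h0: "ss' ! 0 = Psi W (init_state W)"
    and st: "\<forall>i<Suc ?n. (ss' ! i, (ls @ [t]) ! i, ss' ! Suc i) \<in> pddl_delta W"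
    using snoc.prems by (auto simp: is_path_def)
  define ss0' where "ss0' = butlast ss'"
  have len0: "length ss0' = Suc ?n" using len by (simp add: ss0'_def)
  have nth0: "\<And>i. i < Suc ?n \<Longrightarrow> ss0' ! i = ss' ! i"
    unfolding ss0'_def using len by (simp add: nth_butlast)
  have "is_path (Psi W (init_state W)) (pddl_delta W) ss0' ls"
    unfolding is_path_def
  proof (intro conjI allI impI)
    show "length ss0' = Suc ?n" by (rule len0)
    show "ss0' ! 0 = Psi W (init_state W)" using nth0[of 0] h0 by simp
    fix i assume i: "i < ?n"
    have "(ss' ! i, (ls @ [t]) ! i, ss' ! Suc i) \<in> pddl_delta W" using st i by simp
    then show "(ss0' ! i, ls ! i, ss0' ! Suc i) \<in> pddl_delta W"
      using nth0[of i] nth0[of "Suc i"] i by (simp add: nth_append)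
  qed
  then obtain ss0 where p0: "is_path (init_state W) (rg_delta W) ss0 ls" and m0: "map (Psi W) ss0 = ss0'"
    using snoc.IH by blast
  have l0: "length ss0 = Suc ?n" using p0 by (simp add: is_path_def)
  have rs: "ss0 ! ?n \<in> rg_states W" using path_states[OF p0] l0 by simp
  obtain M \<eta> where e: "ss0 ! ?n = (M, \<eta>)" by (cases "ss0 ! ?n") auto
  have "Psi W (ss0 ! ?n) = ss' ! ?n" using m0 l0 nth0[of ?n] by (metis lessI nth_map)
  moreover have "(ss' ! ?n, t, ss' ! Suc ?n) \<in> pddl_delta W"
  proof -
    have "(ss' ! ?n, (ls @ [t]) ! ?n, ss' ! Suc ?n) \<in> pddl_delta W" using st by blast
    then show ?thesis by simp
  qed
  ultimately obtain a where t: "t \<in> N_T (W_N W)" and a: "a \<in> ground_actions (pddl_template W t)"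
    and g: "gamma (pddl_rigid W) (Psi W (M, \<eta>)) a = Some (ss' ! Suc ?n)"
    using e by (auto simp: pddl_delta_def)
  obtain s' where vf: "valid_firing W (M, \<eta>) t s'" and ps: "Psi W s' = ss' ! Suc ?n"
    using bwd[OF ok safe fin rs[unfolded e] t a g] by blast
  have "is_path (init_state W) (rg_delta W) (ss0 @ [s']) (ls @ [t])"
    unfolding is_path_def
  proof (intro conjI allI impI)
    show "length (ss0 @ [s']) = Suc (length (ls @ [t]))" using l0 by simp
    show "(ss0 @ [s']) ! 0 = init_state W" using p0 l0 by (simp add: is_path_def nth_append)
    fix i assume i: "i < length (ls @ [t])"
    show "((ss0 @ [s']) ! i, (ls @ [t]) ! i, (ss0 @ [s']) ! Suc i) \<in> rg_delta W"
    proof (cases "i < ?n")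
      case True
      then show ?thesis using p0 l0 by (simp add: is_path_def nth_append)
    next
      case False
      then have "i = ?n" using i by simp
      then show ?thesis using l0 rs e vf by (simp add: nth_append rg_delta_def)
    qed
  qed
  moreover have "map (Psi W) (ss0 @ [s']) = ss'"
  proof -
    have "map (Psi W) (ss0 @ [s']) = ss0' @ [ss' ! Suc ?n]" using m0 ps by simp
    also have "\<dots> = butlast ss' @ [last ss']"
    proof -
      have "ss' \<noteq> []" using len by auto
      then have "last ss' = ss' ! (length ss' - 1)" by (rule last_conv_nth)
      then show ?thesis using len by (simp add: ss0'_def)
    qed
    also have "\<dots> = ss'" using len by (metis append_butlast_last_id list.size(3) nat.simps(3))
    finally show ?thesis .
  qed
  ultimately show ?case by blast
qed

theorem mainTheorem2:
  fixes W :: "('v, 'd, 'p, 't) dawnet"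
  assumes "dawnet_ok W"
    and "one_safe W"
    and "finite (used_vars W)"
  shows "trace_equivalent
           (rg_states W) (N_T (W_N W)) (init_state W) (rg_delta W)
           (pddl_states W) (N_T (W_N W)) (Psi W (init_state W)) (pddl_delta W)"
  unfolding trace_equivalent_def
proof (intro exI[of _ "Psi W"] exI[of _ id] conjI allI impI)
  show "inj_on (Psi W) (rg_states W)" by (rule Psi_inj[OF assms(1,2)])
  show "inj_on id (N_T (W_N W))" by simp
  show "Psi W ` rg_states W \<subseteq> pddl_states W" using Psi_into[OF assms] by blast
  show "id ` N_T (W_N W) \<subseteq> N_T (W_N W)" by simp
  fix ss ls assume "is_path (init_state W) (rg_delta W) ss ls"
  then show "is_path (Psi W (init_state W)) (pddl_delta W) (map (Psi W) ss) (map id ls)"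
    by (rule fwd_path[OF assms])
next
  fix ss' ls' assume "is_path (Psi W (init_state W)) (pddl_delta W) ss' ls'"
  then obtain ss where "is_path (init_state W) (rg_delta W) ss ls'" "map (Psi W) ss = ss'"
    using bwd_path[OF assms] by blast
  then show "\<exists>ss ls. is_path (init_state W) (rg_delta W) ss ls \<and> map (Psi W) ss = ss' \<and> map id ls = ls'"
    by auto
qed

end
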